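(* Let $1\le r\le m$ and assume $\lambda_r>0$ and $\widehat\lambda_r>0$. Then $$\|\widehat K_r-K_r\|_F\le\sqrt{\lambda_1N}\,\|\Delta H\|_2\le N\|\Delta H\|_2.$$
   Context: Let $\mathcal X$ be a set and $\kappa:\mathcal X\times\mathcal X\to\mathbb R$ a positive semidefinite kernel with $\kappa(\mathbf x,\mathbf x)\le 1$ for all $\mathbf x$. Let $\mathcal H_\kappa$ be its RKHS, with inner product $\langle\cdot,\cdot\rangle$. Let $\mathcal D=\{\mathbf x_1,\ldots,\mathbf x_N\}\subset\mathcal X$ and $K=[\kappa(\mathbf x_i,\mathbf x_j)]_{N\times N}$. Assume $K$ is positive definite, with eigenvalues $\lambda_1\ge\cdots\ge\lambda_N>0$ and orthonormal eigenvectors $\mathbf v_i$. Put $V_{i,j}=[(\mathbf v_1,\ldots,\mathbf v_N)]_{i,j}$ and $K_r=\sum_{i=1}^r\lambda_i\mathbf v_i\mathbf v_i^\top$. Let $\widehat{\mathbf x}_1,\ldots,\widehat{\mathbf x}_m$ be points sampled uniformly from $\mathcal D$. Let $\widehat K=[\kappa(\widehat{\mathbf x}_i,\widehat{\mathbf x}_j)]_{m\times m}$, with eigenvalues $\widehat\lambda_1\ge\cdots\ge\widehat\lambda_m$ and orthonormal eigenvectors $\mathbf u_i$. Put $U_{i,j}=[(\mathbf u_1,\ldots,\mathbf u_r)]_{i,j}$. Define $$\widehat W=\sum_{i=1}^r\widehat\lambda_i^{-1}\mathbf u_i\mathbf u_i^\top,\qquad K_b=[\kappa(\mathbf x_i,\widehat{\mathbf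 x}_j)]_{N\times m},\qquad \widehat K_r=K_b\widehat WK_b^\top.$$ Define $$\varphi_j=\lambda_j^{-1/2}\sum_{i=1}^N V_{i,j}\kappa(\mathbf x_i,\cdot)\quad(j\in[N]),\qquad \widehat\varphi_j=\widehat\lambda_j^{-1/2}\sum_{i=1}^m U_{i,j}\kappa(\widehat{\mathbf x}_i,\cdot)\quad(j\le r).$$ Define $H_r[f]=\sum_{i=1}^r\varphi_i\langle\varphi_i,f\rangle$, $\widehat H_r[f]=\sum_{i=1}^r\widehat\varphi_i\langle\widehat\varphi_i,f\rangle$, and $\Delta H=H_r-\widehat H_r$. Here $\|\cdot\|_2$ denotes the operator (spectral) norm on $\mathcal H_\kappa$, and $\|\cdot\|_F$ the Frobenius norm. *)

theory Defs
  imports "HOL-Analysis.Analysis"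
begin

text \<open>Conventions: all indices are 1-based as in the paper. An N x N matrix is a
function nat => nat => real, only entries with indices in {1..N} matter.
An eigenvector family v is indexed as v j i = i-th component of the j-th eigenvector,
so the paper's V_{i,j} is v j i.\<close>

definition psd_kernel :: "('a \<Rightarrow> 'a \<Rightarrow> real) \<Rightarrow> bool" where
  "psd_kernel \<kappa> \<longleftrightarrow> (\<forall>x y. \<kappa> x y = \<kappa> y x) \<and>
     (\<forall>n (p :: nat \<Rightarrow> 'a) (c :: nat \<Rightarrow> real).
        0 \<le> (\<Sum>i\<in>{1..n}. \<Sum>j\<in>{1..n}. c i * c j * \<kappa> (p i) (p j)))"

text \<open>(H, Phi) realises the RKHS of kappa: Phi x plays the role of kappa(x, .),
reproducing inner products, and the span of the Phi x is dense, so H is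
isometrically isomorphic to the RKHS H_kappa.\<close>
definition rkhs_realisation :: "('a \<Rightarrow> 'a \<Rightarrow> real) \<Rightarrow> ('a \<Rightarrow> 'h::{real_inner,complete_space}) \<Rightarrow> bool" where
  "rkhs_realisation \<kappa> \<Phi> \<longleftrightarrow> (\<forall>x y. \<kappa> x y = inner (\<Phi> x) (\<Phi> y)) \<and>
     closure (span (range \<Phi>)) = UNIV"

definition gram :: "('a \<Rightarrow> 'a \<Rightarrow> real) \<Rightarrow> (nat \<Rightarrow> 'a) \<Rightarrow> nat \<Rightarrow> nat \<Rightarrow> real" where
  "gram \<kappa> p i j = \<kappa> (p i) (p j)"

definition sorted_eigendecomp ::
  "nat \<Rightarrow> (nat \<Rightarrow> nat \<Rightarrow> real) \<Rightarrow> (nat \<Rightarrow> real) \<Rightarrow> (nat \<Rightarrow> nat \<Rightarrow> real) \<Rightarrow> bool" where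
  "sorted_eigendecomp n A lam v \<longleftrightarrow>
     (\<forall>j\<in>{1..n}. \<forall>k\<in>{1..n}. (\<Sum>i\<in>{1..n}. A k i * v j i) = lam j * v j k) \<and>
     (\<forall>j\<in>{1..n}. \<forall>l\<in>{1..n}. (\<Sum>i\<in>{1..n}. v j i * v l i) = (if j = l then 1 else 0)) \<and>
     (\<forall>j\<in>{1..n}. \<forall>l\<in>{1..n}. j \<le> l \<longrightarrow> lam l \<le> lam j)"

definition pos_def_mat :: "nat \<Rightarrow> (nat \<Rightarrow> nat \<Rightarrow> real) \<Rightarrow> bool" where
  "pos_def_mat n A \<longleftrightarrow> (\<forall>i\<in>{1..n}. \<forall>j\<in>{1..n}. A i j = A j i) \<and>
     (\<forall>c. (\<exists>i\<in>{1..n}. c i \<noteq> 0) \<longrightarrow> 0 < (\<Sum>i\<in>{1..n}. \<Sum>j\<in>{1..n}. c i * A i j * c j))"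

definition frob_norm :: "nat \<Rightarrow> nat \<Rightarrow> (nat \<Rightarrow> nat \<Rightarrow> real) \<Rightarrow> real" where
  "frob_norm n k A = sqrt (\<Sum>i\<in>{1..n}. \<Sum>j\<in>{1..k}. (A i j)\<^sup>2)"

definition trunc_mat :: "nat \<Rightarrow> (nat \<Rightarrow> real) \<Rightarrow> (nat \<Rightarrow> nat \<Rightarrow> real) \<Rightarrow> nat \<Rightarrow> nat \<Rightarrow> real" where
  "trunc_mat r lam v a b = (\<Sum>i\<in>{1..r}. lam i * v i a * v i b)"

definition trunc_pinv :: "nat \<Rightarrow> (nat \<Rightarrow> real) \<Rightarrow> (nat \<Rightarrow> nat \<Rightarrow> real) \<Rightarrow> nat \<Rightarrow> nat \<Rightarrow> real" where
  "trunc_pinv r lam u a b = (\<Sum>i\<in>{1..r}. inverse (lam i) * u i a * u i b)"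

definition nystrom :: "('a \<Rightarrow> 'a \<Rightarrow> real) \<Rightarrow> (nat \<Rightarrow> 'a) \<Rightarrow> nat \<Rightarrow> (nat \<Rightarrow> 'a)
     \<Rightarrow> (nat \<Rightarrow> nat \<Rightarrow> real) \<Rightarrow> nat \<Rightarrow> nat \<Rightarrow> real" where
  "nystrom \<kappa> x m xh W i j =
     (\<Sum>a\<in>{1..m}. \<Sum>b\<in>{1..m}. \<kappa> (x i) (xh a) * W a b * \<kappa> (x j) (xh b))"

definition eigfun :: "('a \<Rightarrow> 'h::real_inner) \<Rightarrow> (nat \<Rightarrow> 'a) \<Rightarrow> nat \<Rightarrow> (nat \<Rightarrow> real)
     \<Rightarrow> (nat \<Rightarrow> nat \<Rightarrow> real) \<Rightarrow> nat \<Rightarrow> 'h" where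
  "eigfun \<Phi> p n lam v j = (1 / sqrt (lam j)) *\<^sub>R (\<Sum>i\<in>{1..n}. v j i *\<^sub>R \<Phi> (p i))"

definition proj_op :: "nat \<Rightarrow> (nat \<Rightarrow> 'h::real_inner) \<Rightarrow> 'h \<Rightarrow> 'h" where
  "proj_op r \<phi> f = (\<Sum>i\<in>{1..r}. inner (\<phi> i) f *\<^sub>R \<phi> i)"

end

theory Submission
  imports Defs "Jordan_Normal_Form.Determinant"
begin

lemma sum_shift1: "(\<Sum>i\<in>{1..n}. f i) = (\<Sum>k<n. f (Suc k) :: real)"
  by (induction n) auto

lemma orth_complete:
  fixes v :: "nat \<Rightarrow> nat \<Rightarrow> real"
  assumes on: "\<forall>j\<in>{1..n}. \<forall>l\<in>{1..n}. (\<Sum>i\<in>{1..n}. v j i * v l i) = (if j = l then 1 else 0)"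
    and a: "a \<in> {1..n}" and b: "b \<in> {1..n}"
  shows "(\<Sum>j\<in>{1..n}. v j a * v j b) = (if a = b then 1 else 0)"
proof -
  define M where "M = mat n n (\<lambda>(i,j). v (Suc i) (Suc j))"
  have Mc: "M \<in> carrier_mat n n" "transpose_mat M \<in> carrier_mat n n" unfolding M_def by auto
  have "M * transpose_mat M = 1\<^sub>m n"
  proof (rule eq_matI)
    fix i j assume ij: "i < dim_row (1\<^sub>m n)" "j < dim_col (1\<^sub>m n)"
    have "(M * transpose_mat M) $$ (i,j) = (\<Sum>k<n. v (Suc i) (Suc k) * v (Suc j) (Suc k))"
      using ij unfolding M_def by (auto simp: scalar_prod_def intro!: sum.cong)
    also have "\<dots> = (\<Sum>k\<in>{1..n}. v (Suc i) k * v (Suc j) k)" by (rule sum_shift1[symmetric])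
    also have "\<dots> = (if i = j then 1 else 0)" using on ij by auto
    finally show "(M * transpose_mat M) $$ (i,j) = 1\<^sub>m n $$ (i,j)" using ij by auto
  qed (auto simp: M_def)
  hence T: "transpose_mat M * M = 1\<^sub>m n" using mat_mult_left_right_inverse Mc by blast
  have ai: "a - 1 < n" "b - 1 < n" using a b by auto
  have "(transpose_mat M * M) $$ (a-1,b-1) = (\<Sum>k<n. v (Suc k) a * v (Suc k) b)"
    using ai a b unfolding M_def by (auto simp: scalar_prod_def intro!: sum.cong)
  also have "\<dots> = (\<Sum>j\<in>{1..n}. v j a * v j b)" by (rule sum_shift1[symmetric])
  moreover have "a - 1 = b - 1 \<longleftrightarrow> a = b" using a b by auto
  ultimately show ?thesis using T ai a b by auto
qed

lemma quad_eig:
  fixes A v :: "nat \<Rightarrow> nat \<Rightarrow> real"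
  assumes eig: "\<forall>j\<in>{1..n}. \<forall>k\<in>{1..n}. (\<Sum>i\<in>{1..n}. A k i * v j i) = lam j * v j k"
    and comp: "\<forall>a\<in>{1..n}. \<forall>b\<in>{1..n}. (\<Sum>j\<in>{1..n}. v j a * v j b) = (if a = b then 1 else 0)"
  shows "(\<Sum>k\<in>{1..n}. \<Sum>i\<in>{1..n}. c k * A k i * c i)
          = (\<Sum>j\<in>{1..n}. lam j * (\<Sum>a\<in>{1..n}. c a * v j a)^2)"
    and "(\<Sum>j\<in>{1..n}. (\<Sum>a\<in>{1..n}. c a * v j a)^2) = (\<Sum>k\<in>{1..n}. (c k)^2)"
proof -
  define \<alpha> where "\<alpha> j = (\<Sum>a\<in>{1..n}. c a * v j a)" for j
  have rep: "c i = (\<Sum>j\<in>{1..n}. \<alpha> j * v j i)" if i: "i \<in> {1..n}" for i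
  proof -
    have "(\<Sum>j\<in>{1..n}. \<alpha> j * v j i) = (\<Sum>j\<in>{1..n}. \<Sum>a\<in>{1..n}. c a * (v j a * v j i))"
      unfolding \<alpha>_def by (simp add: sum_distrib_right mult.assoc)
    also have "\<dots> = (\<Sum>a\<in>{1..n}. c a * (\<Sum>j\<in>{1..n}. v j a * v j i))"
      by (subst sum.swap) (simp add: sum_distrib_left)
    also have "\<dots> = (\<Sum>a\<in>{1..n}. c a * (if a = i then 1 else 0))"
      using comp i by (intro sum.cong) auto
    also have "\<dots> = c i" using i by (simp add: if_distrib cong: if_cong)
    finally show ?thesis by simp
  qed
  have Ac: "(\<Sum>i\<in>{1..n}. A k i * c i) = (\<Sum>j\<in>{1..n}. \<alpha> j * lam j * v j k)" if k: "k \<in> {1..n}" for k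
  proof -
    have "(\<Sum>i\<in>{1..n}. A k i * c i) = (\<Sum>i\<in>{1..n}. \<Sum>j\<in>{1..n}. \<alpha> j * (A k i * v j i))"
      using rep by (auto simp: sum_distrib_left mult.commute mult.left_commute intro!: sum.cong)
    also have "\<dots> = (\<Sum>j\<in>{1..n}. \<alpha> j * (\<Sum>i\<in>{1..n}. A k i * v j i))"
      by (subst sum.swap) (simp add: sum_distrib_left)
    also have "\<dots> = (\<Sum>j\<in>{1..n}. \<alpha> j * lam j * v j k)"
      using eig k by (auto intro!: sum.cong)
    finally show ?thesis .
  qed
  have "(\<Sum>k\<in>{1..n}. \<Sum>i\<in>{1..n}. c k * A k i * c i) = (\<Sum>k\<in>{1..n}. c k * (\<Sum>i\<in>{1..n}. A k i * c i))"
    by (simp add: sum_distrib_left mult.assoc)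
  also have "\<dots> = (\<Sum>k\<in>{1..n}. \<Sum>j\<in>{1..n}. \<alpha> j * lam j * (c k * v j k))"
    using Ac by (auto simp: sum_distrib_left mult.commute mult.left_commute intro!: sum.cong)
  also have "\<dots> = (\<Sum>j\<in>{1..n}. \<alpha> j * lam j * \<alpha> j)"
    unfolding \<alpha>_def by (subst sum.swap) (simp add: sum_distrib_left)
  finally show "(\<Sum>k\<in>{1..n}. \<Sum>i\<in>{1..n}. c k * A k i * c i)
          = (\<Sum>j\<in>{1..n}. lam j * (\<Sum>a\<in>{1..n}. c a * v j a)^2)"
    unfolding \<alpha>_def by (simp add: power2_eq_square mult.commute mult.left_commute)
  have "(\<Sum>j\<in>{1..n}. (\<alpha> j)^2) = (\<Sum>j\<in>{1..n}. \<Sum>a\<in>{1..n}. \<alpha> j * (c a * v j a))"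
    unfolding power2_eq_square by (simp add: \<alpha>_def[of j for j] sum_distrib_left)
  also have "\<dots> = (\<Sum>a\<in>{1..n}. c a * (\<Sum>j\<in>{1..n}. \<alpha> j * v j a))"
    by (subst sum.swap) (simp add: sum_distrib_left mult.commute mult.left_commute)
  also have "\<dots> = (\<Sum>k\<in>{1..n}. (c k)^2)"
    using rep by (auto simp: power2_eq_square intro!: sum.cong)
  finally show "(\<Sum>j\<in>{1..n}. (\<Sum>a\<in>{1..n}. c a * v j a)^2) = (\<Sum>k\<in>{1..n}. (c k)^2)"
    unfolding \<alpha>_def .
qed

lemma spec_bound:
  fixes A v :: "nat \<Rightarrow> nat \<Rightarrow> real"
  assumes eig: "\<forall>j\<in>{1..n}. \<forall>k\<in>{1..n}. (\<Sum>i\<in>{1..n}. A k i * v j i) = lam j * v j k"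
    and comp: "\<forall>a\<in>{1..n}. \<forall>b\<in>{1..n}. (\<Sum>j\<in>{1..n}. v j a * v j b) = (if a = b then 1 else 0)"
    and srt: "\<forall>j\<in>{1..n}. lam j \<le> L"
  shows "(\<Sum>k\<in>{1..n}. \<Sum>i\<in>{1..n}. c k * A k i * c i) \<le> L * (\<Sum>k\<in>{1..n}. (c k)^2)"
proof -
  have "(\<Sum>j\<in>{1..n}. lam j * (\<Sum>a\<in>{1..n}. c a * v j a)^2) \<le> (\<Sum>j\<in>{1..n}. L * (\<Sum>a\<in>{1..n}. c a * v j a)^2)"
    using srt by (intro sum_mono mult_right_mono) auto
  also have "\<dots> = L * (\<Sum>j\<in>{1..n}. (\<Sum>a\<in>{1..n}. c a * v j a)^2)" by (simp add: sum_distrib_left)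
  also have "\<dots> = L * (\<Sum>k\<in>{1..n}. (c k)^2)" using quad_eig(2)[OF eig comp, of c] by simp
  finally show ?thesis using quad_eig(1)[OF eig comp, of c] by simp
qed

lemma trace_eig:
  fixes A v :: "nat \<Rightarrow> nat \<Rightarrow> real"
  assumes eig: "\<forall>j\<in>{1..n}. \<forall>k\<in>{1..n}. (\<Sum>i\<in>{1..n}. A k i * v j i) = lam j * v j k"
    and on: "\<forall>j\<in>{1..n}. \<forall>l\<in>{1..n}. (\<Sum>i\<in>{1..n}. v j i * v l i) = (if j = l then 1 else 0)"
    and comp: "\<forall>a\<in>{1..n}. \<forall>b\<in>{1..n}. (\<Sum>j\<in>{1..n}. v j a * v j b) = (if a = b then 1 else 0)"
  shows "(\<Sum>j\<in>{1..n}. lam j) = (\<Sum>k\<in>{1..n}. A k k)"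
proof -
  have l: "lam j = (\<Sum>k\<in>{1..n}. \<Sum>i\<in>{1..n}. A k i * (v j k * v j i))" if j: "j \<in> {1..n}" for j
  proof -
    have "lam j = (\<Sum>k\<in>{1..n}. v j k * (lam j * v j k))"
      using on j by (simp add: sum_distrib_left[symmetric] mult.commute mult.left_commute)
    also have "\<dots> = (\<Sum>k\<in>{1..n}. v j k * (\<Sum>i\<in>{1..n}. A k i * v j i))"
      using eig j by (auto intro!: sum.cong)
    finally show ?thesis by (simp add: sum_distrib_left mult.commute mult.left_commute)
  qed
  have "(\<Sum>j\<in>{1..n}. lam j) = (\<Sum>j\<in>{1..n}. \<Sum>k\<in>{1..n}. \<Sum>i\<in>{1..n}. A k i * (v j k * v j i))"
    using l by (intro sum.cong) auto
  also have "\<dots> = (\<Sum>k\<in>{1..n}. \<Sum>j\<in>{1..n}. \<Sum>i\<in>{1..n}. A k i * (v j k * v j i))"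
    by (rule sum.swap)
  also have "\<dots> = (\<Sum>k\<in>{1..n}. \<Sum>i\<in>{1..n}. \<Sum>j\<in>{1..n}. A k i * (v j k * v j i))"
    by (intro sum.cong refl sum.swap)
  also have "\<dots> = (\<Sum>k\<in>{1..n}. \<Sum>i\<in>{1..n}. A k i * (\<Sum>j\<in>{1..n}. v j k * v j i))"
    by (simp add: sum_distrib_left)
  also have "\<dots> = (\<Sum>k\<in>{1..n}. \<Sum>i\<in>{1..n}. A k i * (if k = i then 1 else 0))"
    using comp by (intro sum.cong) auto
  also have "\<dots> = (\<Sum>k\<in>{1..n}. A k k)" by (simp add: if_distrib cong: if_cong)
  finally show ?thesis .
qed

lemma quad_inner:
  fixes P :: "nat \<Rightarrow> 'h::real_inner"
  shows "(\<Sum>k\<in>S. \<Sum>i\<in>S. c k * inner (P k) (P i) * c i) = inner (\<Sum>k\<in>S. c k *\<^sub>R P k) (\<Sum>i\<in>S. c i *\<^sub>R P i)"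
proof -
  have "inner (\<Sum>k\<in>S. c k *\<^sub>R P k) (\<Sum>i\<in>S. c i *\<^sub>R P i) = (\<Sum>k\<in>S. \<Sum>i\<in>S. inner (c k *\<^sub>R P k) (c i *\<^sub>R P i))"
    by (simp only: inner_sum_left inner_sum_right) (rule sum.swap)
  also have "\<dots> = (\<Sum>k\<in>S. \<Sum>i\<in>S. c k * inner (P k) (P i) * c i)"
    by (intro sum.cong refl) (simp add: mult_ac)
  finally show ?thesis by simp
qed

lemma sq_bound:
  fixes P :: "nat \<Rightarrow> 'h::real_inner"
  assumes q: "\<And>c. (\<Sum>k\<in>S. \<Sum>i\<in>S. c k * inner (P k) (P i) * c i) \<le> L * (\<Sum>k\<in>S. (c k)^2)"
    and L: "0 \<le> L" and fin: "finite S"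
  shows "(\<Sum>a\<in>S. (inner (P a) g)^2) \<le> L * (norm g)^2"
proof -
  define c where "c a = inner (P a) g" for a
  define s where "s = (\<Sum>a\<in>S. (c a)^2)"
  define w where "w = (\<Sum>k\<in>S. c k *\<^sub>R P k)"
  have s0: "0 \<le> s" unfolding s_def by (simp add: sum_nonneg)
  have "s = inner w g" unfolding s_def w_def c_def
    by (simp add: inner_sum_left power2_eq_square)
  also have "\<dots> \<le> norm w * norm g" by (rule norm_cauchy_schwarz)
  finally have s1: "s \<le> norm w * norm g" .
  have w2: "(norm w)^2 \<le> L * s"
    using q[of c] unfolding quad_inner s_def w_def by (simp add: power2_norm_eq_inner)
  have "s^2 \<le> (norm w * norm g)^2" using s0 s1 by (intro power_mono) auto
  also have "\<dots> = (norm w)^2 * (norm g)^2" by (simp add: power_mult_distrib)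
  also have "\<dots> \<le> (L * s) * (norm g)^2" using w2 by (intro mult_right_mono) auto
  finally have "s * s \<le> s * (L * (norm g)^2)" by (simp add: power2_eq_square mult_ac)
  hence "s \<le> L * (norm g)^2" if "s > 0" using that by simp
  moreover have "0 \<le> L * (norm g)^2" using L by simp
  ultimately show ?thesis using s0 unfolding s_def c_def by fastforce
qed

lemma bl_proj: "bounded_linear (proj_op r \<phi>)"
proof -
  have "bounded_linear (\<lambda>f. \<Sum>i\<in>{1..r}. inner (\<phi> i) f *\<^sub>R \<phi> i)"
    by (intro bounded_linear_sum bounded_linear_compose[OF bounded_linear_scaleR_left bounded_linear_inner_right])
  thus ?thesis unfolding proj_op_def[abs_def] .
qed

lemma trunc_id:
  fixes \<Phi> :: "'a \<Rightarrow> 'h::real_inner"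
  assumes kin: "\<forall>a b. \<kappa> a b = inner (\<Phi> a) (\<Phi> b)"
    and eig: "\<forall>j\<in>{1..N}. \<forall>k\<in>{1..N}. (\<Sum>i\<in>{1..N}. gram \<kappa> x k i * v j i) = lam j * v j k"
    and rN: "r \<le> N" and pos: "\<forall>j\<in>{1..r}. lam j > 0"
    and a: "a \<in> {1..N}" and b: "b \<in> {1..N}"
  shows "trunc_mat r lam v a b = inner (\<Phi> (x a)) (proj_op r (eigfun \<Phi> x N lam v) (\<Phi> (x b)))"
proof -
  have ip: "inner (eigfun \<Phi> x N lam v j) (\<Phi> (x c)) = sqrt (lam j) * v j c"
    if j: "j \<in> {1..r}" and c: "c \<in> {1..N}" for j c
  proof -
    have lj: "lam j > 0" using pos j by auto
    have e1: "inner (eigfun \<Phi> x N lam v j) (\<Phi> (x c)) = (1 / sqrt (lam j)) * (\<Sum>i\<in>{1..N}. v j i * inner (\<Phi> (x i)) (\<Phi> (x c)))"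
      unfolding eigfun_def by (simp add: inner_sum_left)
    have e2: "(\<Sum>i\<in>{1..N}. gram \<kappa> x c i * v j i) = (\<Sum>i\<in>{1..N}. v j i * inner (\<Phi> (x i)) (\<Phi> (x c)))"
      using kin by (simp add: gram_def inner_commute mult.commute)
    have "inner (eigfun \<Phi> x N lam v j) (\<Phi> (x c)) = (1 / sqrt (lam j)) * (\<Sum>i\<in>{1..N}. gram \<kappa> x c i * v j i)"
      using e1 e2 by simp
    also have "\<dots> = (1 / sqrt (lam j)) * (lam j * v j c)" using eig j c rN by auto
    also have "\<dots> = sqrt (lam j) * v j c"
    proof -
      have sq: "lam j = sqrt (lam j) * sqrt (lam j)" using lj by simp
      have "sqrt (lam j) > 0" using lj by simp
      then show ?thesis by (subst sq) (simp add: field_simps)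
    qed
    finally show ?thesis .
  qed
  have "inner (\<Phi> (x a)) (proj_op r (eigfun \<Phi> x N lam v) (\<Phi> (x b)))
      = (\<Sum>j\<in>{1..r}. inner (eigfun \<Phi> x N lam v j) (\<Phi> (x b)) * inner (eigfun \<Phi> x N lam v j) (\<Phi> (x a)))"
    unfolding proj_op_def by (simp add: inner_sum_right inner_commute)
  also have "\<dots> = (\<Sum>j\<in>{1..r}. lam j * v j a * v j b)"
  proof (intro sum.cong refl)
    fix j assume j: "j \<in> {1..r}"
    have lj: "lam j > 0" using pos j by auto
    have "sqrt (lam j) * v j b * (sqrt (lam j) * v j a) = (sqrt (lam j) * sqrt (lam j)) * v j a * v j b"
      by (simp only: mult_ac)
    also have "\<dots> = lam j * v j a * v j b" using lj by simp
    finally show "inner (eigfun \<Phi> x N lam v j) (\<Phi> (x b)) * inner (eigfun \<Phi> x N lam v j) (\<Phi> (x a)) = lam j * v j a * v j b"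
      using ip[OF j a] ip[OF j b] by simp
  qed
  finally show ?thesis unfolding trunc_mat_def by simp
qed

lemma nys_id:
  fixes \<Phi> :: "'a \<Rightarrow> 'h::real_inner"
  assumes kin: "\<forall>a b. \<kappa> a b = inner (\<Phi> a) (\<Phi> b)"
    and pos: "\<forall>j\<in>{1..r}. lamh j > 0"
  shows "nystrom \<kappa> x m xh (trunc_pinv r lamh u) a b
       = inner (\<Phi> (x a)) (proj_op r (eigfun \<Phi> xh m lamh u) (\<Phi> (x b)))"
proof -
  define A where "A j = (\<Sum>c\<in>{1..m}. u j c * \<kappa> (x a) (xh c))" for j
  define B where "B j = (\<Sum>c\<in>{1..m}. u j c * \<kappa> (x b) (xh c))" for j
  have ip: "inner (eigfun \<Phi> xh m lamh u j) (\<Phi> (x c)) = (1 / sqrt (lamh j)) * (\<Sum>i\<in>{1..m}. u j i * \<kappa> (x c) (xh i))" for j c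
  proof -
    have e1: "inner (eigfun \<Phi> xh m lamh u j) (\<Phi> (x c)) = (1 / sqrt (lamh j)) * (\<Sum>i\<in>{1..m}. u j i * inner (\<Phi> (xh i)) (\<Phi> (x c)))"
      unfolding eigfun_def by (simp add: inner_sum_left)
    have e2: "(\<Sum>i\<in>{1..m}. u j i * \<kappa> (x c) (xh i)) = (\<Sum>i\<in>{1..m}. u j i * inner (\<Phi> (xh i)) (\<Phi> (x c)))"
      using kin by (simp add: inner_commute)
    show ?thesis using e1 e2 by simp
  qed
  have "inner (\<Phi> (x a)) (proj_op r (eigfun \<Phi> xh m lamh u) (\<Phi> (x b)))
      = (\<Sum>j\<in>{1..r}. inner (eigfun \<Phi> xh m lamh u j) (\<Phi> (x b)) * inner (eigfun \<Phi> xh m lamh u j) (\<Phi> (x a)))"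
    unfolding proj_op_def by (simp add: inner_sum_right inner_commute)
  also have "\<dots> = (\<Sum>j\<in>{1..r}. inverse (lamh j) * A j * B j)"
  proof (intro sum.cong refl)
    fix j assume j: "j \<in> {1..r}"
    have lj: "lamh j > 0" using pos j by auto
    have sq: "sqrt (lamh j) * sqrt (lamh j) = lamh j" using lj by simp
    have "(1 / sqrt (lamh j)) * (1 / sqrt (lamh j)) = 1 / (sqrt (lamh j) * sqrt (lamh j))" by simp
    also have "\<dots> = inverse (lamh j)" by (simp only: sq divide_inverse mult_1)
    finally have ii: "(1 / sqrt (lamh j)) * (1 / sqrt (lamh j)) = inverse (lamh j)" .
    thus "inner (eigfun \<Phi> xh m lamh u j) (\<Phi> (x b)) * inner (eigfun \<Phi> xh m lamh u j) (\<Phi> (x a)) =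
         inverse (lamh j) * A j * B j"
    proof -
      have "inner (eigfun \<Phi> xh m lamh u j) (\<Phi> (x b)) * inner (eigfun \<Phi> xh m lamh u j) (\<Phi> (x a))
         = ((1 / sqrt (lamh j)) * (1 / sqrt (lamh j))) * A j * B j"
        unfolding ip A_def B_def by (simp only: mult_ac)
      thus ?thesis by (simp only: ii)
    qed
  qed
  also have "\<dots> = (\<Sum>j\<in>{1..r}. \<Sum>c\<in>{1..m}. \<Sum>d\<in>{1..m}. \<kappa> (x a) (xh c) * (inverse (lamh j) * u j c * u j d) * \<kappa> (x b) (xh d))"
    unfolding A_def B_def by (intro sum.cong refl) (simp add: sum_product sum_distrib_left mult_ac)
  also have "\<dots> = (\<Sum>c\<in>{1..m}. \<Sum>j\<in>{1..r}. \<Sum>d\<in>{1..m}. \<kappa> (x a) (xh c) * (inverse (lamh j) * u j c * u j d) * \<kappa> (x b) (xh d))"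
    by (rule sum.swap)
  also have "\<dots> = (\<Sum>c\<in>{1..m}. \<Sum>d\<in>{1..m}. \<Sum>j\<in>{1..r}. \<kappa> (x a) (xh c) * (inverse (lamh j) * u j c * u j d) * \<kappa> (x b) (xh d))"
    by (intro sum.cong refl sum.swap)
  also have "\<dots> = nystrom \<kappa> x m xh (trunc_pinv r lamh u) a b"
    unfolding nystrom_def trunc_pinv_def by (simp add: sum_distrib_left sum_distrib_right)
  finally show ?thesis ..
qed


lemma r_le_N:
  fixes \<Phi> :: "'a \<Rightarrow> 'h::real_inner"
  assumes kin: "\<forall>a b. \<kappa> a b = inner (\<Phi> a) (\<Phi> b)"
    and Kheig: "sorted_eigendecomp m (gram \<kappa> xh) lamh u"
    and sample: "\<forall>i\<in>{1..m}. xh i \<in> x ` {1..N}"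
    and rm: "r \<le> m" and lamhpos: "lamh r > 0"
  shows "r \<le> N"
proof -
  have eig: "\<forall>j\<in>{1..m}. \<forall>k\<in>{1..m}. (\<Sum>i\<in>{1..m}. gram \<kappa> xh k i * u j i) = lamh j * u j k"
    and on: "\<forall>j\<in>{1..m}. \<forall>l\<in>{1..m}. (\<Sum>i\<in>{1..m}. u j i * u l i) = (if j = l then 1 else 0)"
    and srt: "\<forall>j\<in>{1..m}. \<forall>l\<in>{1..m}. j \<le> l \<longrightarrow> lamh l \<le> lamh j"
    using Kheig unfolding sorted_eigendecomp_def by auto
  define w where "w j = (\<Sum>i\<in>{1..m}. u j i *\<^sub>R \<Phi> (xh i))" for j
  have ww: "inner (w j) (w l) = (if j = l then lamh l else 0)" if j: "j \<in> {1..m}" and l: "l \<in> {1..m}" for j l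
  proof -
    have "inner (w j) (w l) = (\<Sum>i\<in>{1..m}. \<Sum>k\<in>{1..m}. u j i * gram \<kappa> xh i k * u l k)"
      unfolding w_def gram_def
      by (simp only: inner_sum_left inner_sum_right) (subst sum.swap, intro sum.cong refl, simp add: kin mult_ac)
    also have "\<dots> = (\<Sum>i\<in>{1..m}. u j i * (\<Sum>k\<in>{1..m}. gram \<kappa> xh i k * u l k))"
      by (simp add: sum_distrib_left mult_ac)
    also have "\<dots> = (\<Sum>i\<in>{1..m}. u j i * (lamh l * u l i))"
      using eig l by (intro sum.cong refl) auto
    also have "\<dots> = lamh l * (\<Sum>i\<in>{1..m}. u j i * u l i)"
      by (simp add: sum_distrib_left mult_ac)
    also have "\<dots> = (if j = l then lamh l else 0)" using on j l by auto
    finally show ?thesis .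
  qed
  have pj: "lamh j > 0" if "j \<in> {1..r}" for j
  proof -
    have "lamh r \<le> lamh j" using srt that rm by auto
    thus ?thesis using lamhpos by simp
  qed
  define W where "W = w ` {1..r}"
  have inj: "inj_on w {1..r}"
  proof (rule inj_onI)
    fix j l assume j: "j \<in> {1..r}" and l: "l \<in> {1..r}" and e: "w j = w l"
    show "j = l"
    proof (rule ccontr)
      assume "j \<noteq> l"
      hence "inner (w j) (w l) = 0" using ww j l rm by auto
      moreover have "inner (w j) (w j) = lamh j" using ww j rm by auto
      ultimately show False using e pj[OF j] by simp
    qed
  qed
  have po: "pairwise real_inner_class.orthogonal W"
    unfolding W_def pairwise_def real_inner_class.orthogonal_def
  proof (intro ballI impI)
    fix y z assume "y \<in> w ` {1..r}" "z \<in> w ` {1..r}" "y \<noteq> z"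
    then obtain j l where "j \<in> {1..r}" "l \<in> {1..r}" "y = w j" "z = w l" "j \<noteq> l" by blast
    thus "inner y z = 0" using ww[of j l] rm by simp
  qed
  have n0: "0 \<notin> W"
  proof
    assume "0 \<in> W"
    then obtain j where j: "j \<in> {1..r}" "w j = 0" unfolding W_def by auto
    have "inner (w j) (w j) = lamh j" using ww[of j j] j(1) rm by simp
    thus False using j pj[OF j(1)] by simp
  qed
  have ind: "independent W" by (rule pairwise_orthogonal_independent[OF po n0])
  have sp: "W \<subseteq> span ((\<lambda>i. \<Phi> (x i)) ` {1..N})"
  proof
    fix y assume "y \<in> W"
    then obtain j where y: "y = w j" unfolding W_def by auto
    have h: "\<Phi> (xh i) \<in> span ((\<lambda>i. \<Phi> (x i)) ` {1..N})" if "i \<in> {1..m}" for i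
    proof -
      have "xh i \<in> x ` {1..N}" using sample that by simp
      then obtain k where "k \<in> {1..N}" "xh i = x k" by (rule imageE) simp
      thus ?thesis by (intro span_base) auto
    qed
    show "y \<in> span ((\<lambda>i. \<Phi> (x i)) ` {1..N})"
      unfolding y w_def
    proof (rule span_sum)
      fix i assume "i \<in> {1..m}"
      then show "u j i *\<^sub>R \<Phi> (xh i) \<in> span ((\<lambda>i. \<Phi> (x i)) ` {1..N})" by (rule span_scale[OF h])
    qed
  qed
  have "card W \<le> card ((\<lambda>i. \<Phi> (x i)) ` {1..N})"
    using independent_span_bound[OF _ ind sp] by simp
  also have "\<dots> \<le> N" using card_image_le[of "{1..N}" "\<lambda>i. \<Phi> (x i)"] by simp
  finally show ?thesis using card_image[OF inj] unfolding W_def by simp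
qed


theorem theorem2:
  fixes \<kappa> :: "'a \<Rightarrow> 'a \<Rightarrow> real"
    and \<Phi> :: "'a \<Rightarrow> 'h::{real_inner,complete_space}"
    and x :: "nat \<Rightarrow> 'a" and xh :: "nat \<Rightarrow> 'a"
    and N m r :: nat
    and lam :: "nat \<Rightarrow> real" and v :: "nat \<Rightarrow> nat \<Rightarrow> real"
    and lamh :: "nat \<Rightarrow> real" and u :: "nat \<Rightarrow> nat \<Rightarrow> real"
  assumes kpsd: "psd_kernel \<kappa>"
    and kbound: "\<forall>z. \<kappa> z z \<le> 1"
    and rkhs: "rkhs_realisation \<kappa> \<Phi>"
    and Kpd: "pos_def_mat N (gram \<kappa> x)"
    and Keig: "sorted_eigendecomp N (gram \<kappa> x) lam v"
    and sample: "\<forall>i\<in>{1..m}. xh i \<in> x ` {1..N}"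
    and Kheig: "sorted_eigendecomp m (gram \<kappa> xh) lamh u"
    and r1: "1 \<le> r" and rm: "r \<le> m"
    and lampos: "lam r > 0" and lamhpos: "lamh r > 0"
  shows "frob_norm N N (\<lambda>i j. nystrom \<kappa> x m xh (trunc_pinv r lamh u) i j - trunc_mat r lam v i j)
           \<le> sqrt (lam 1 * real N) *
              onorm (\<lambda>f. proj_op r (eigfun \<Phi> x N lam v) f - proj_op r (eigfun \<Phi> xh m lamh u) f)
      \<and> sqrt (lam 1 * real N) *
              onorm (\<lambda>f. proj_op r (eigfun \<Phi> x N lam v) f - proj_op r (eigfun \<Phi> xh m lamh u) f)
           \<le> real N *
              onorm (\<lambda>f. proj_op r (eigfun \<Phi> x N lam v) f - proj_op r (eigfun \<Phi> xh m lamh u) f)"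
proof -
  define \<Delta> where "\<Delta> = (\<lambda>f. proj_op r (eigfun \<Phi> x N lam v) f - proj_op r (eigfun \<Phi> xh m lamh u) f)"
  define Onm where "Onm = onorm \<Delta>"
  define P where "P i = \<Phi> (x i)" for i
  have kin: "\<forall>a b. \<kappa> a b = inner (\<Phi> a) (\<Phi> b)" using rkhs unfolding rkhs_realisation_def by auto
  have eig: "\<forall>j\<in>{1..N}. \<forall>k\<in>{1..N}. (\<Sum>i\<in>{1..N}. gram \<kappa> x k i * v j i) = lam j * v j k"
    and on: "\<forall>j\<in>{1..N}. \<forall>l\<in>{1..N}. (\<Sum>i\<in>{1..N}. v j i * v l i) = (if j = l then 1 else 0)"
    and srt: "\<forall>j\<in>{1..N}. \<forall>l\<in>{1..N}. j \<le> l \<longrightarrow> lam l \<le> lam j"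
    using Keig unfolding sorted_eigendecomp_def by auto
  have srth: "\<forall>j\<in>{1..m}. \<forall>l\<in>{1..m}. j \<le> l \<longrightarrow> lamh l \<le> lamh j"
    using Kheig unfolding sorted_eigendecomp_def by auto
  have rN: "r \<le> N" by (rule r_le_N[OF kin Kheig sample rm lamhpos])
  have N1: "1 \<le> N" using r1 rN by simp
  have comp: "\<forall>a\<in>{1..N}. \<forall>b\<in>{1..N}. (\<Sum>j\<in>{1..N}. v j a * v j b) = (if a = b then 1 else 0)"
    using orth_complete[OF on] by blast
  have lpos: "\<forall>j\<in>{1..r}. lam j > 0"
  proof
    fix j assume j: "j \<in> {1..r}"
    have "lam r \<le> lam j" using srt j rN by auto
    thus "lam j > 0" using lampos by simp
  qed
  have lhpos: "\<forall>j\<in>{1..r}. lamh j > 0"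
  proof
    fix j assume j: "j \<in> {1..r}"
    have "lamh r \<le> lamh j" using srth j rm by auto
    thus "lamh j > 0" using lamhpos by simp
  qed
  have L1: "lam 1 > 0" using lpos r1 by auto
  have l1: "\<forall>j\<in>{1..N}. lam j \<le> lam 1" using srt N1 by auto
  have gk: "gram \<kappa> x k i = inner (P k) (P i)" for k i unfolding gram_def P_def using kin by simp
  have bl: "bounded_linear \<Delta>" unfolding \<Delta>_def by (intro bounded_linear_sub bl_proj)
  have Onm0: "0 \<le> Onm" unfolding Onm_def by (rule onorm_pos_le[OF bl])
  have D: "nystrom \<kappa> x m xh (trunc_pinv r lamh u) a b - trunc_mat r lam v a b = - inner (P a) (\<Delta> (P b))"
    if a: "a \<in> {1..N}" and b: "b \<in> {1..N}" for a b
    using nys_id[OF kin lhpos, where x=x and m=m and xh=xh and u=u and a=a and b=b] trunc_id[OF kin eig rN lpos a b]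
    unfolding \<Delta>_def P_def by (simp add: inner_diff_right)
  have q: "(\<Sum>k\<in>{1..N}. \<Sum>i\<in>{1..N}. c k * inner (P k) (P i) * c i) \<le> lam 1 * (\<Sum>k\<in>{1..N}. (c k)^2)" for c
    using spec_bound[OF eig comp l1, of c] by (simp add: gk)
  have sqb: "(\<Sum>a\<in>{1..N}. (inner (P a) g)^2) \<le> lam 1 * (norm g)^2" for g
    by (rule sq_bound[OF q]) (use L1 in auto)
  have nb: "(norm (\<Delta> (P b)))^2 \<le> Onm^2" for b
  proof -
    have "(norm (P b))^2 \<le> 1" using kbound kin unfolding P_def by (simp add: power2_norm_eq_inner)
    hence nP: "norm (P b) \<le> 1" by (simp add: power_le_one_iff abs_le_square_iff[symmetric])
    have "norm (\<Delta> (P b)) \<le> Onm * norm (P b)" unfolding Onm_def by (rule onorm[OF bl])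
    also have "\<dots> \<le> Onm" using Onm0 nP by (simp add: mult_left_le)
    finally show ?thesis by (intro power_mono) auto
  qed
  have "(\<Sum>a\<in>{1..N}. \<Sum>b\<in>{1..N}. (nystrom \<kappa> x m xh (trunc_pinv r lamh u) a b - trunc_mat r lam v a b)\<^sup>2)
      = (\<Sum>b\<in>{1..N}. \<Sum>a\<in>{1..N}. (inner (P a) (\<Delta> (P b)))^2)"
    by (subst sum.swap) (intro sum.cong refl, simp add: D)
  also have "\<dots> \<le> (\<Sum>b\<in>{1..N}. lam 1 * (norm (\<Delta> (P b)))^2)"
    by (intro sum_mono sqb)
  also have "\<dots> \<le> (\<Sum>b\<in>{1..N}. lam 1 * Onm^2)"
    using L1 nb by (intro sum_mono mult_left_mono) auto
  also have "\<dots> = (sqrt (lam 1 * real N) * Onm)^2"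
    using L1 Onm0 by (simp add: power_mult_distrib)
  finally have F: "frob_norm N N (\<lambda>i j. nystrom \<kappa> x m xh (trunc_pinv r lamh u) i j - trunc_mat r lam v i j)
      \<le> sqrt (lam 1 * real N) * Onm"
    unfolding frob_norm_def using Onm0 L1 by (intro real_le_lsqrt) auto
  have lnn: "lam j \<ge> 0" if j: "j \<in> {1..N}" for j
  proof -
    have "lam j = (\<Sum>k\<in>{1..N}. v j k * (lam j * v j k))"
      using on j by (simp add: sum_distrib_left[symmetric] mult.commute mult.left_commute)
    also have "\<dots> = (\<Sum>k\<in>{1..N}. v j k * (\<Sum>i\<in>{1..N}. gram \<kappa> x k i * v j i))"
      using eig j by (auto intro!: sum.cong)
    also have "\<dots> = (\<Sum>k\<in>{1..N}. \<Sum>i\<in>{1..N}. v j k * inner (P k) (P i) * v j i)"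
      by (simp add: sum_distrib_left gk mult_ac)
    also have "\<dots> = inner (\<Sum>k\<in>{1..N}. v j k *\<^sub>R P k) (\<Sum>i\<in>{1..N}. v j i *\<^sub>R P i)"
      by (rule quad_inner)
    finally show ?thesis by simp
  qed
  have "lam 1 \<le> (\<Sum>j\<in>{1..N}. lam j)"
    using N1 lnn by (intro member_le_sum) auto
  also have "\<dots> = (\<Sum>k\<in>{1..N}. gram \<kappa> x k k)" by (rule trace_eig[OF eig on comp])
  also have "\<dots> \<le> (\<Sum>k\<in>{1..N}. 1)" using kbound unfolding gram_def by (intro sum_mono) auto
  finally have lN: "lam 1 \<le> real N" by simp
  have "sqrt (lam 1 * real N) \<le> sqrt (real N * real N)"
    using lN by (intro real_sqrt_le_mono mult_right_mono) auto
  hence "sqrt (lam 1 * real N) \<le> real N" by simp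
  hence S: "sqrt (lam 1 * real N) * Onm \<le> real N * Onm" using Onm0 by (rule mult_right_mono)
  show ?thesis using F S unfolding Onm_def \<Delta>_def by simp
qed
end
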